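(* With the notation of the context, for every $\alpha\in\mathbb{R}$ the set $$\varphi(\ell_\alpha)\cap M=\left\{\left(x_j^*,\ \alpha+\frac{\lambda x_j}{d}\bmod\frac1d\right):\ j\in\mathbb{Z}\right\}$$ is a dense subset of $$L_\alpha:=\left\{\left(\xi,\ \alpha-\frac{\lambda^*}{d}\xi\bmod\frac1d\right):\ 0\le\xi<\cos\theta+\sin\theta\right\}\subset M.$$
   Context: Let $0<\theta<\pi/2$ with $\tan\theta$ irrational, $\epsilon=\cos\theta+\sin\theta$, $\Lambda_F=\{m\cos\theta-n\sin\theta:\ m,n\in\mathbb{Z},\ 0\le m\sin\theta+n\cos\theta<\epsilon\}$, $\Lambda=\Lambda_F\times\mathbb{Z}$. For $x=m\cos\theta-n\sin\theta$ ($m,n\in\mathbb{Z}$) put $x^*=m\sin\theta+n\cos\theta$. Enumerate $\Lambda_F=\{x_j\}_{j\in\mathbb{Z}}$ increasingly with $x_0=0$. Let $a,b,d\in\mathbb{Z}$ be relatively prime (gcd$(a,b,d)=1$) with $d>0$, $\lambda=a\cos\theta-b\sin\theta$, $\lambda^*=a\sin\theta+b\cos\theta$. Let $X$ be the quotient of $[0,\cos\theta)\times[0,1/d]\times[0,\cos\theta]\cup[\cos\theta,\cos\theta+\sin\theta)\times[0,1/d]\times[0,\sin\theta]$ by $(\xi,0,\zeta)\sim(\xi,1/d,\zeta)$, $(\xi,\eta,\cos\theta)\sim(\xi+\sin\theta,\eta,0)$ for $0\le\xi<\cos\theta$, and $(\xi,\eta,\sin\theta)\sim(\xi-\cos\theta,\eta,0)$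 for $\cos\theta\le\xi<\cos\theta+\sin\theta$. Define $\varphi:\mathbb{R}^2\to X$ by $\varphi(x,y)=(x_j^*,\ y\bmod\frac1d,\ x-x_j)$ for $x_j\le x<x_{j+1}$. Let $M=[0,\cos\theta+\sin\theta)\times[0,1/d]$ with $(\xi,0)\sim(\xi,1/d)$ (i.e. second coordinate taken in $\mathbb{R}/\frac1d\mathbb{Z}$), identified with $M\times\{0\}\subset X$. For $\alpha\in\mathbb{R}$, $\ell_\alpha=\{(t,\alpha+t\lambda/d):\ t\in\mathbb{R}\}$. *)

theory Defs
  imports "HOL-Analysis.Analysis"
begin

definition rmod :: "real \<Rightarrow> real \<Rightarrow> real" where
  "rmod y c = y - c * of_int \<lfloor>y / c\<rfloor>"

definition LamF :: "real \<Rightarrow> real set" where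
  "LamF \<theta> = {of_int m * cos \<theta> - of_int n * sin \<theta> | m n :: int.
      0 \<le> of_int m * sin \<theta> + of_int n * cos \<theta> \<and>
      of_int m * sin \<theta> + of_int n * cos \<theta> < cos \<theta> + sin \<theta>}"

text \<open>The star map x = m cos - n sin  \<mapsto>  x* = m sin + n cos
  (well defined since tan theta is irrational).\<close>
definition star :: "real \<Rightarrow> real \<Rightarrow> real" where
  "star \<theta> x = (THE s. \<exists>m n :: int. x = of_int m * cos \<theta> - of_int n * sin \<theta> \<and>
                                  s = of_int m * sin \<theta> + of_int n * cos \<theta>)"

text \<open>The box whose quotient is X.\<close>
definition Xbox :: "real \<Rightarrow> int \<Rightarrow> real \<times> real \<times> real \<Rightarrow> bool" where
  "Xbox \<theta> d p = (case p of (\<xi>, \<eta>, \<zeta>) \<Rightarrow>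
      (0 \<le> \<xi> \<and> \<xi> < cos \<theta> \<and> 0 \<le> \<eta> \<and> \<eta> \<le> 1 / of_int d \<and> 0 \<le> \<zeta> \<and> \<zeta> \<le> cos \<theta>) \<or>
      (cos \<theta> \<le> \<xi> \<and> \<xi> < cos \<theta> + sin \<theta> \<and> 0 \<le> \<eta> \<and> \<eta> \<le> 1 / of_int d \<and> 0 \<le> \<zeta> \<and> \<zeta> \<le> sin \<theta>))"

definition Xgen :: "real \<Rightarrow> int \<Rightarrow> real \<times> real \<times> real \<Rightarrow> real \<times> real \<times> real \<Rightarrow> bool" where
  "Xgen \<theta> d p q =
     ((\<exists>\<xi> \<zeta>. p = (\<xi>, 0, \<zeta>) \<and> q = (\<xi>, 1 / of_int d, \<zeta>) \<and> Xbox \<theta> d p \<and> Xbox \<theta> d q) \<or>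
      (\<exists>\<xi> \<eta>. 0 \<le> \<xi> \<and> \<xi> < cos \<theta> \<and> 0 \<le> \<eta> \<and> \<eta> \<le> 1 / of_int d \<and>
              p = (\<xi>, \<eta>, cos \<theta>) \<and> q = (\<xi> + sin \<theta>, \<eta>, 0)) \<or>
      (\<exists>\<xi> \<eta>. cos \<theta> \<le> \<xi> \<and> \<xi> < cos \<theta> + sin \<theta> \<and> 0 \<le> \<eta> \<and> \<eta> \<le> 1 / of_int d \<and>
              p = (\<xi>, \<eta>, sin \<theta>) \<and> q = (\<xi> - cos \<theta>, \<eta>, 0)))"

definition Xeq :: "real \<Rightarrow> int \<Rightarrow> real \<times> real \<times> real \<Rightarrow> real \<times> real \<times> real \<Rightarrow> bool" where
  "Xeq \<theta> d = equivclp (Xgen \<theta> d)"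

text \<open>phi : R^2 \<rightarrow> X, given the increasing enumeration xs of Lambda_F;
  represented by the triple (x_j*, y mod 1/d, x - x_j) with x_j \<le> x < x_{j+1}.\<close>
definition phi :: "real \<Rightarrow> int \<Rightarrow> (int \<Rightarrow> real) \<Rightarrow> real \<times> real \<Rightarrow> real \<times> real \<times> real" where
  "phi \<theta> d xs p = (case p of (x, y) \<Rightarrow>
     (let j = (THE j. xs j \<le> x \<and> x < xs (j + 1)) in
       (star \<theta> (xs j), rmod y (1 / of_int d), x - xs j)))"

text \<open>M = [0, cos+sin) \<times> (R / (1/d)Z), points represented with second coordinate in [0,1/d).\<close>
definition Mset :: "real \<Rightarrow> int \<Rightarrow> (real \<times> real) set" where
  "Mset \<theta> d = {(\<xi>, \<eta>). 0 \<le> \<xi> \<and> \<xi> < cos \<theta> + sin \<theta> \<and> 0 \<le> \<eta> \<and> \<eta> < 1 / of_int d}"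

text \<open>phi(ell_alpha) \<inter> M, with M identified with M \<times> {0} \<subseteq> X.\<close>
definition phiLineM :: "real \<Rightarrow> int \<Rightarrow> (int \<Rightarrow> real) \<Rightarrow> real \<Rightarrow> real \<Rightarrow> (real \<times> real) set" where
  "phiLineM \<theta> d xs lam \<alpha> = {q \<in> Mset \<theta> d. \<exists>t. Xeq \<theta> d (phi \<theta> d xs (t, \<alpha> + t * lam / of_int d)) (fst q, snd q, 0)}"

text \<open>Density of S in L inside M (topology of [0,cos+sin) \<times> R/(1/d)Z).\<close>
definition denseM :: "int \<Rightarrow> (real \<times> real) set \<Rightarrow> (real \<times> real) set \<Rightarrow> bool" where
  "denseM d S L = (S \<subseteq> L \<and> (\<forall>p\<in>L. \<forall>e>0. \<exists>s\<in>S. \<exists>k::int.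
       \<bar>fst s - fst p\<bar> < e \<and> \<bar>snd s - snd p - of_int k / of_int d\<bar> < e))"

end

theory Submission
  imports Defs
begin

lemma rmod_bounds: assumes "c > 0" shows "0 \<le> rmod y c" "rmod y c < c"
proof -
  have a: "of_int \<lfloor>y/c\<rfloor> \<le> y/c" "y/c < of_int \<lfloor>y/c\<rfloor> + 1" by linarith+
  have "c * of_int \<lfloor>y/c\<rfloor> \<le> c * (y/c)" using a(1) assms by (intro mult_left_mono) auto
  then have "c * of_int \<lfloor>y/c\<rfloor> \<le> y" using assms by simp
  then show "0 \<le> rmod y c" by (simp add: rmod_def)
  have "y < c * of_int \<lfloor>y/c\<rfloor> + c" using a(2) assms by (simp add: field_simps)
  then show "rmod y c < c" by (simp add: rmod_def)
qed

lemma rmod_shift: assumes "c \<noteq> 0" shows "rmod (y + of_int k * c) c = rmod y c"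
proof -
  have "(y + of_int k * c)/c = y/c + of_int k" using assms by (simp add: field_simps)
  then have "\<lfloor>(y + of_int k * c)/c\<rfloor> = \<lfloor>y/c\<rfloor> + k" by simp
  then show ?thesis unfolding rmod_def by (simp add: algebra_simps)
qed

lemma rmod_id: assumes "0 \<le> y" "y < c" shows "rmod y c = y"
proof -
  have "0 \<le> y/c" "y/c < 1" using assms by auto
  then have "\<lfloor>y/c\<rfloor> = 0" by (simp add: floor_eq_iff)
  then show ?thesis by (simp add: rmod_def)
qed

lemma rmod_idem: "c > 0 \<Longrightarrow> rmod (rmod y c) c = rmod y c"
  by (simp add: rmod_bounds rmod_id)

lemma star_eq:
  assumes "cos \<theta> > 0" "tan \<theta> \<notin> \<rat>"
  shows "star \<theta> (of_int m * cos \<theta> - of_int n * sin \<theta>) = of_int m * sin \<theta> + of_int n * cos \<theta>"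
  unfolding star_def
proof (rule the_equality)
  show "\<exists>m' n'::int. of_int m * cos \<theta> - of_int n * sin \<theta> = of_int m' * cos \<theta> - of_int n' * sin \<theta> \<and>
     of_int m * sin \<theta> + of_int n * cos \<theta> = of_int m' * sin \<theta> + of_int n' * cos \<theta>" by blast
next
  fix s assume "\<exists>m' n'::int. of_int m * cos \<theta> - of_int n * sin \<theta> = of_int m' * cos \<theta> - of_int n' * sin \<theta> \<and>
     s = of_int m' * sin \<theta> + of_int n' * cos \<theta>"
  then obtain m' n' :: int where e: "of_int m * cos \<theta> - of_int n * sin \<theta> = of_int m' * cos \<theta> - of_int n' * sin \<theta>"
    and s: "s = of_int m' * sin \<theta> + of_int n' * cos \<theta>" by blast
  have e2: "of_int (m - m') * cos \<theta> = of_int (n - n') * sin \<theta>" using e by (simp add: algebra_simps)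
  have "n = n'"
  proof (rule ccontr)
    assume "n \<noteq> n'"
    then have "tan \<theta> = of_int (m - m') / of_int (n - n')" using e2 assms(1)
      by (simp add: tan_def field_simps)
    then have "tan \<theta> \<in> \<rat>" by simp
    then show False using assms by blast
  qed
  then have "m = m'" using e2 assms(1) by simp
  then show "s = of_int m * sin \<theta> + of_int n * cos \<theta>" using s \<open>n = n'\<close> by simp
qed

definition key :: "real \<Rightarrow> int \<Rightarrow> real \<times> real \<times> real \<Rightarrow> real \<times> real \<times> real" where
"key \<theta> d p = (case p of (\<xi>,\<eta>,\<zeta>) \<Rightarrow>
   if \<zeta> = cos \<theta> \<and> \<xi> < cos \<theta> then (\<xi> + sin \<theta>, 0, rmod \<eta> (1/of_int d))
   else if \<zeta> = sin \<theta> \<and> cos \<theta> \<le> \<xi> then (\<xi> - cos \<theta>, 0, rmod \<eta> (1/of_int d))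
   else (\<xi>, \<zeta>, rmod \<eta> (1/of_int d)))"

lemma key_gen: assumes "cos \<theta> > 0" "sin \<theta> > 0" "d > 0" "Xgen \<theta> d p q"
  shows "key \<theta> d p = key \<theta> d q"
proof -
  have r: "rmod (1/of_int d) (1/of_int d) = rmod 0 (1/of_int d)"
    using rmod_shift[of "1/of_int d" 0 1] assms(3) by simp
  show ?thesis using assms(4) assms(1,2) unfolding Xgen_def key_def
    by (auto simp: r)
qed

lemma key_eq: assumes "cos \<theta> > 0" "sin \<theta> > 0" "d > 0" "Xeq \<theta> d p q"
  shows "key \<theta> d p = key \<theta> d q"
proof -
  have "(symclp (Xgen \<theta> d))\<^sup>*\<^sup>* p q" using assms(4) by (simp add: Xeq_def equivclp_def)
  then show ?thesis
  proof (induction rule: rtranclp_induct)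
    case base then show ?case by simp
  next
    case (step y z)
    have "Xgen \<theta> d y z \<or> Xgen \<theta> d z y" using step(2) by (simp add: symclp_def)
    then have "key \<theta> d y = key \<theta> d z" using key_gen[OF assms(1-3), of y z] key_gen[OF assms(1-3), of z y] by auto
    then show ?case using step(3) by simp
  qed
qed

lemma dense_grp:
  fixes u \<delta> :: real
  assumes c: "cos \<theta> > 0" and irr: "tan \<theta> \<notin> \<rat>" and dl: "\<delta> > 0"
  shows "\<exists>m n::int. u < of_int m * sin \<theta> + of_int n * cos \<theta> \<and> of_int m * sin \<theta> + of_int n * cos \<theta> < u + \<delta>"
proof -
  have "\<delta> / (2 * cos \<theta>) > 0" using c dl by simp
  then obtain h k :: int where hk: "\<bar>of_int k * tan \<theta> - of_int h - (u + \<delta>/2) / cos \<theta>\<bar> < \<delta> / (2 * cos \<theta>)"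
    using sequence_of_fractional_parts_is_dense[OF irr] by metis
  have "of_int k * tan \<theta> - of_int h - (u + \<delta>/2) / cos \<theta> = (of_int k * sin \<theta> + of_int (-h) * cos \<theta> - (u + \<delta>/2)) / cos \<theta>"
    using c by (simp add: tan_def field_simps)
  then have "\<bar>of_int k * sin \<theta> + of_int (-h) * cos \<theta> - (u + \<delta>/2)\<bar> / cos \<theta> < \<delta> / (2 * cos \<theta>)"
    using hk c by simp
  then have "\<bar>of_int k * sin \<theta> + of_int (-h) * cos \<theta> - (u + \<delta>/2)\<bar> < \<delta> / 2"
    using c by (simp add: field_simps)
  then have "u < of_int k * sin \<theta> + of_int (-h) * cos \<theta> \<and> of_int k * sin \<theta> + of_int (-h) * cos \<theta> < u + \<delta>"
    by (simp only: abs_less_iff) linarith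
  then show ?thesis by blast
qed

context
  fixes \<theta> :: real and xs :: "int \<Rightarrow> real"
  assumes th0: "0 < \<theta>" and th1: "\<theta> < pi/2" and irr: "tan \<theta> \<notin> \<rat>"
    and sm: "strict_mono xs" and rng: "range xs = LamF \<theta>"
begin

lemma c_pos: "cos \<theta> > 0" using th0 th1 by (intro cos_gt_zero_pi) auto
lemma s_pos: "sin \<theta> > 0" using th0 th1 by (intro sin_gt_zero) auto

lemma LamF_iff: "x \<in> LamF \<theta> \<longleftrightarrow> (\<exists>m n::int. x = of_int m * cos \<theta> - of_int n * sin \<theta> \<and>
   0 \<le> of_int m * sin \<theta> + of_int n * cos \<theta> \<and> of_int m * sin \<theta> + of_int n * cos \<theta> < cos \<theta> + sin \<theta>)"
  unfolding LamF_def by blast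

lemma LamF_rep: assumes "x \<in> LamF \<theta>"
  obtains m n :: int where "x = of_int m * cos \<theta> - of_int n * sin \<theta>"
    "star \<theta> x = of_int m * sin \<theta> + of_int n * cos \<theta>"
    "0 \<le> star \<theta> x" "star \<theta> x < cos \<theta> + sin \<theta>"
  using assms star_eq[OF c_pos irr] unfolding LamF_iff by metis

lemma xs_in: "xs j \<in> LamF \<theta>" using rng by auto

lemma next_le: assumes "y \<in> LamF \<theta>" "xs j < y" shows "xs (j+1) \<le> y"
proof -
  obtain k where k: "y = xs k" using assms(1) rng by auto
  have "j < k" using assms(2) k sm by (metis not_less_iff_gr_or_eq strict_mono_less)
  then have "j + 1 \<le> k" by simp
  then show ?thesis using k sm by (simp add: strict_mono_less_eq)
qed

lemma gap_le: "xs (j+1) \<le> xs j + (if star \<theta> (xs j) < cos \<theta> then cos \<theta> else sin \<theta>)"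
proof -
  obtain m n :: int where r: "xs j = of_int m * cos \<theta> - of_int n * sin \<theta>"
    "star \<theta> (xs j) = of_int m * sin \<theta> + of_int n * cos \<theta>"
    "0 \<le> star \<theta> (xs j)" "star \<theta> (xs j) < cos \<theta> + sin \<theta>"
    using LamF_rep[OF xs_in] by metis
  show ?thesis
  proof (cases "star \<theta> (xs j) < cos \<theta>")
    case True
    have "xs j + cos \<theta> \<in> LamF \<theta>" unfolding LamF_iff
      by (rule exI[of _ "m+1"], rule exI[of _ n]) (use r True c_pos s_pos in \<open>auto simp: algebra_simps\<close>)
    then show ?thesis using True next_le c_pos by fastforce
  next
    case False
    have "xs j + sin \<theta> \<in> LamF \<theta>" unfolding LamF_iff
      by (rule exI[of _ "m"], rule exI[of _ "n - 1"]) (use r False c_pos s_pos in \<open>auto simp: algebra_simps\<close>)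
    then show ?thesis using False next_le s_pos by fastforce
  qed
qed

lemma step_up: assumes "y \<in> LamF \<theta>" shows "\<exists>z\<in>LamF \<theta>. z \<ge> y + min (cos \<theta>) (sin \<theta>)"
proof -
  obtain m n :: int where r: "y = of_int m * cos \<theta> - of_int n * sin \<theta>"
    "star \<theta> y = of_int m * sin \<theta> + of_int n * cos \<theta>"
    "0 \<le> star \<theta> y" "star \<theta> y < cos \<theta> + sin \<theta>"
    using LamF_rep[OF assms] by metis
  show ?thesis
  proof (cases "star \<theta> y < cos \<theta>")
    case True
    have "y + cos \<theta> \<in> LamF \<theta>" unfolding LamF_iff
      by (rule exI[of _ "m+1"], rule exI[of _ n]) (use r True c_pos s_pos in \<open>auto simp: algebra_simps\<close>)
    then show ?thesis by (intro bexI[of _ "y + cos \<theta>"]) auto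
  next
    case False
    have "y + sin \<theta> \<in> LamF \<theta>" unfolding LamF_iff
      by (rule exI[of _ "m"], rule exI[of _ "n - 1"]) (use r False c_pos s_pos in \<open>auto simp: algebra_simps\<close>)
    then show ?thesis by (intro bexI[of _ "y + sin \<theta>"]) auto
  qed
qed

lemma step_down: assumes "y \<in> LamF \<theta>" shows "\<exists>z\<in>LamF \<theta>. z \<le> y - min (cos \<theta>) (sin \<theta>)"
proof -
  obtain m n :: int where r: "y = of_int m * cos \<theta> - of_int n * sin \<theta>"
    "star \<theta> y = of_int m * sin \<theta> + of_int n * cos \<theta>"
    "0 \<le> star \<theta> y" "star \<theta> y < cos \<theta> + sin \<theta>"
    using LamF_rep[OF assms] by metis
  show ?thesis
  proof (cases "star \<theta> y < sin \<theta>")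
    case True
    have "y - sin \<theta> \<in> LamF \<theta>" unfolding LamF_iff
      by (rule exI[of _ "m"], rule exI[of _ "n+1"]) (use r True c_pos s_pos in \<open>auto simp: algebra_simps\<close>)
    then show ?thesis by (intro bexI[of _ "y - sin \<theta>"]) auto
  next
    case False
    have "y - cos \<theta> \<in> LamF \<theta>" unfolding LamF_iff
      by (rule exI[of _ "m - 1"], rule exI[of _ n]) (use r False c_pos s_pos in \<open>auto simp: algebra_simps\<close>)
    then show ?thesis by (intro bexI[of _ "y - cos \<theta>"]) auto
  qed
qed

lemma zero_in: "0 \<in> LamF \<theta>"
  unfolding LamF_iff by (rule exI[of _ 0], rule exI[of _ 0]) (use c_pos s_pos in auto)

lemma unb: "(\<exists>y\<in>LamF \<theta>. y \<ge> real N * min (cos \<theta>) (sin \<theta>)) \<and> (\<exists>y\<in>LamF \<theta>. y \<le> - real N * min (cos \<theta>) (sin \<theta>))"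
proof (induction N)
  case 0 then show ?case using zero_in by auto
next
  case (Suc N)
  then obtain y1 y2 where y: "y1 \<in> LamF \<theta>" "y1 \<ge> real N * min (cos \<theta>) (sin \<theta>)"
     "y2 \<in> LamF \<theta>" "y2 \<le> - real N * min (cos \<theta>) (sin \<theta>)" by blast
  obtain z1 where "z1 \<in> LamF \<theta>" "z1 \<ge> y1 + min (cos \<theta>) (sin \<theta>)" using step_up[OF y(1)] by blast
  moreover obtain z2 where "z2 \<in> LamF \<theta>" "z2 \<le> y2 - min (cos \<theta>) (sin \<theta>)" using step_down[OF y(3)] by blast
  ultimately show ?case using y
    by (intro conjI bexI[of _ z1] bexI[of _ z2]) (auto simp: algebra_simps)
qed

lemma interval_ex: "\<exists>j. xs j \<le> t \<and> t < xs (j+1)"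
proof -
  have mpos: "min (cos \<theta>) (sin \<theta>) > 0" using c_pos s_pos by simp
  obtain N :: nat where N: "\<bar>t\<bar> < real N * min (cos \<theta>) (sin \<theta>)"
    using reals_Archimedean3[OF mpos] by blast
  obtain y1 y2 where y: "y1 \<in> LamF \<theta>" "y1 \<ge> real N * min (cos \<theta>) (sin \<theta>)"
     "y2 \<in> LamF \<theta>" "y2 \<le> - real N * min (cos \<theta>) (sin \<theta>)" using unb by blast
  obtain k j0 where k: "xs k = y1" "xs j0 = y2" using y rng by (metis imageE)
  have tk: "t < xs k" and tj: "xs j0 \<le> t" using N y k by auto
  define S where "S = {j \<in> {j0..k}. xs j \<le> t}"
  have fin: "finite S" unfolding S_def by (rule finite_subset[of _ "{j0..k}"]) auto
  have j0k: "j0 \<le> k" using tk tj sm by (metis less_le_not_le order.trans strict_mono_less_eq)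
  have "j0 \<in> S" using tj j0k unfolding S_def by simp
  then have ne: "S \<noteq> {}" by blast
  define j where "j = Max S"
  have jS: "j \<in> S" using fin ne j_def by simp
  then have jt: "xs j \<le> t" unfolding S_def by simp
  have "t < xs (j+1)"
  proof (rule ccontr)
    assume "\<not> t < xs (j+1)"
    then have a: "xs (j+1) \<le> t" by simp
    have "j + 1 \<le> k"
    proof (rule ccontr)
      assume "\<not> j + 1 \<le> k"
      then have "k \<le> j" by simp
      then have "xs k \<le> xs j" using sm by (simp add: strict_mono_less_eq)
      then show False using tk jt by simp
    qed
    then have "j + 1 \<in> S" using a jS unfolding S_def by auto
    then have "j + 1 \<le> j" using Max_ge[OF fin] j_def by blast
    then show False by simp
  qed
  then show ?thesis using jt by blast
qed

lemma interval_the: assumes "xs i \<le> t" "t < xs (i+1)"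
  shows "(THE j. xs j \<le> t \<and> t < xs (j+1)) = i"
proof (rule the_equality)
  show "xs i \<le> t \<and> t < xs (i+1)" using assms by simp
next
  fix j assume j: "xs j \<le> t \<and> t < xs (j+1)"
  show "j = i"
  proof (rule ccontr)
    assume "j \<noteq> i"
    then have "j + 1 \<le> i \<or> i + 1 \<le> j" by linarith
    then show False
    proof
      assume "j + 1 \<le> i" then have "xs (j+1) \<le> xs i" using sm by (simp add: strict_mono_less_eq)
      then show False using j assms by simp
    next
      assume "i + 1 \<le> j" then have "xs (i+1) \<le> xs j" using sm by (simp add: strict_mono_less_eq)
      then show False using j assms by simp
    qed
  qed
qed

end


lemma key_phi: assumes "cos \<theta> > 0" "sin \<theta> > 0" "0 \<le> \<zeta>" "\<zeta> < (if \<sigma> < cos \<theta> then cos \<theta> else sin \<theta>)"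
  shows "key \<theta> d (\<sigma>, r, \<zeta>) = (\<sigma>, \<zeta>, rmod r (1/of_int d))"
  using assms by (auto simp: key_def split: if_splits)

lemma key_M: assumes "cos \<theta> > 0" "sin \<theta> > 0"
  shows "key \<theta> d (\<xi>, \<eta>, 0) = (\<xi>, 0, rmod \<eta> (1/of_int d))"
  using assms by (auto simp: key_def)

lemma line_shift:
  fixes \<alpha> :: real and a b m n d :: int
  assumes "d > 0"
  shows "rmod (\<alpha> + (of_int a * cos \<theta> - of_int b * sin \<theta>) * (of_int m * cos \<theta> - of_int n * sin \<theta>) / of_int d) (1/of_int d)
       = rmod (\<alpha> - (of_int a * sin \<theta> + of_int b * cos \<theta>) / of_int d * (of_int m * sin \<theta> + of_int n * cos \<theta>)) (1/of_int d)"
proof -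
  have sc: "sin \<theta> * sin \<theta> = 1 - cos \<theta> * cos \<theta>"
    using sin_cos_squared_add[of \<theta>] by (simp add: power2_eq_square)
  have i2: "(of_int a * cos \<theta> - of_int b * sin \<theta>) * (of_int m * cos \<theta> - of_int n * sin \<theta>)
      + (of_int a * sin \<theta> + of_int b * cos \<theta>) * (of_int m * sin \<theta> + of_int n * cos \<theta>)
      = of_int a * of_int m + of_int b * of_int n" by (simp add: algebra_simps sc)
  have "\<alpha> + (of_int a * cos \<theta> - of_int b * sin \<theta>) * (of_int m * cos \<theta> - of_int n * sin \<theta>) / of_int d
      = (\<alpha> - (of_int a * sin \<theta> + of_int b * cos \<theta>) / of_int d * (of_int m * sin \<theta> + of_int n * cos \<theta>))
        + of_int (a*m + b*n) * (1 / of_int d)"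
    using assms by (simp add: field_simps i2[symmetric])
  then show ?thesis by (simp only:) (rule rmod_shift, use assms in simp)
qed


theorem mainTheorem5:
  fixes \<theta> \<alpha> :: real and a b d :: int and xs :: "int \<Rightarrow> real"
  assumes "0 < \<theta>" and "\<theta> < pi / 2"
    and "tan \<theta> \<notin> \<rat>"
    and "strict_mono xs" and "range xs = LamF \<theta>" and "xs 0 = 0"
    and "gcd a (gcd b d) = 1" and "d > 0"
  shows "let lam = of_int a * cos \<theta> - of_int b * sin \<theta>;
             lamS = of_int a * sin \<theta> + of_int b * cos \<theta>;
             L = {(\<xi>, rmod (\<alpha> - lamS / of_int d * \<xi>) (1 / of_int d)) | \<xi>.
                    0 \<le> \<xi> \<and> \<xi> < cos \<theta> + sin \<theta>}
         in phiLineM \<theta> d xs lam \<alpha> =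
              {(star \<theta> (xs j), rmod (\<alpha> + lam * xs j / of_int d) (1 / of_int d)) | j. True}
            \<and> denseM d (phiLineM \<theta> d xs lam \<alpha>) L"
proof -
  note A5 = assms(1-5)
  have c: "cos \<theta> > 0" using c_pos[OF A5] .
  have s: "sin \<theta> > 0" using s_pos[OF A5] .
  have dp: "(1 / of_int d :: real) > 0" using assms(8) by simp
  have dp': "(of_int d :: real) > 0" using assms(8) by simp
  define lam where "lam = of_int a * cos \<theta> - of_int b * sin \<theta>"
  define lamS where "lamS = of_int a * sin \<theta> + of_int b * cos \<theta>"
  define L where "L = {(\<xi>, rmod (\<alpha> - lamS / of_int d * \<xi>) (1 / of_int d)) | \<xi>.
                    0 \<le> \<xi> \<and> \<xi> < cos \<theta> + sin \<theta>}"
  define S where "S = {(star \<theta> (xs j), rmod (\<alpha> + lam * xs j / of_int d) (1 / of_int d)) | j. True}"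
  have shift: "rmod (\<alpha> + lam * xs j / of_int d) (1 / of_int d) = rmod (\<alpha> - lamS / of_int d * star \<theta> (xs j)) (1 / of_int d)" for j
  proof -
    obtain m n :: int where r: "xs j = of_int m * cos \<theta> - of_int n * sin \<theta>"
      "star \<theta> (xs j) = of_int m * sin \<theta> + of_int n * cos \<theta>"
      using LamF_rep[OF A5 xs_in[OF A5]] by metis
    show ?thesis unfolding r(2) unfolding r(1) lam_def lamS_def by (rule line_shift[OF assms(8)])
  qed
  have eqS: "phiLineM \<theta> d xs lam \<alpha> = S"
  proof (intro equalityI subsetI)
    fix q assume q: "q \<in> phiLineM \<theta> d xs lam \<alpha>"
    then have qM: "q \<in> Mset \<theta> d" by (simp add: phiLineM_def)
    obtain t where X: "Xeq \<theta> d (phi \<theta> d xs (t, \<alpha> + t * lam / of_int d)) (fst q, snd q, 0)"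
      using q by (auto simp: phiLineM_def)
    obtain J where J: "xs J \<le> t" "t < xs (J+1)" using interval_ex[OF A5] by blast
    have th: "(THE j. xs j \<le> t \<and> t < xs (j+1)) = J" using interval_the[OF A5 J] .
    have ph: "phi \<theta> d xs (t, \<alpha> + t * lam / of_int d) =
       (star \<theta> (xs J), rmod (\<alpha> + t * lam / of_int d) (1 / of_int d), t - xs J)"
      by (simp add: phi_def th Let_def)
    have K: "key \<theta> d (star \<theta> (xs J), rmod (\<alpha> + t * lam / of_int d) (1 / of_int d), t - xs J)
        = key \<theta> d (fst q, snd q, 0)" using key_eq[OF c s assms(8) X] ph by simp
    have gap: "t - xs J < (if star \<theta> (xs J) < cos \<theta> then cos \<theta> else sin \<theta>)"
      using gap_le[OF A5, of J] J by simp
    have K1: "key \<theta> d (star \<theta> (xs J), rmod (\<alpha> + t * lam / of_int d) (1 / of_int d), t - xs J)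
        = (star \<theta> (xs J), t - xs J, rmod (rmod (\<alpha> + t * lam / of_int d) (1 / of_int d)) (1 / of_int d))"
      using key_phi[OF c s _ gap] J by simp
    have K2: "key \<theta> d (fst q, snd q, 0) = (fst q, 0, rmod (snd q) (1 / of_int d))"
      using key_M[OF c s] .
    have sq: "0 \<le> snd q" "snd q < 1 / of_int d" using qM by (auto simp: Mset_def)
    have t: "t = xs J" and f: "fst q = star \<theta> (xs J)"
      and sn: "snd q = rmod (\<alpha> + t * lam / of_int d) (1 / of_int d)"
      using K K1 K2 rmod_idem[OF dp] rmod_id[OF sq] by auto
    have "q = (star \<theta> (xs J), rmod (\<alpha> + lam * xs J / of_int d) (1 / of_int d))"
      using f sn t by (simp add: prod_eq_iff mult.commute)
    then show "q \<in> S" unfolding S_def by blast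
  next
    fix q assume "q \<in> S"
    then obtain j where q: "q = (star \<theta> (xs j), rmod (\<alpha> + lam * xs j / of_int d) (1 / of_int d))"
      unfolding S_def by blast
    obtain m n :: int where r: "0 \<le> star \<theta> (xs j)" "star \<theta> (xs j) < cos \<theta> + sin \<theta>"
      using LamF_rep[OF A5 xs_in[OF A5]] by metis
    have qM: "q \<in> Mset \<theta> d" unfolding q Mset_def using r rmod_bounds[OF dp] by auto
    have j1: "xs j < xs (j+1)" using assms(4) by (simp add: strict_mono_less)
    have th: "(THE i. xs i \<le> xs j \<and> xs j < xs (i+1)) = j" using interval_the[OF A5, of j "xs j"] j1 by simp
    have ph: "phi \<theta> d xs (xs j, \<alpha> + xs j * lam / of_int d) = (fst q, snd q, 0)"
      by (simp add: phi_def th Let_def q mult.commute)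
    have "Xeq \<theta> d (phi \<theta> d xs (xs j, \<alpha> + xs j * lam / of_int d)) (fst q, snd q, 0)"
      unfolding ph Xeq_def equivclp_def by simp
    then show "q \<in> phiLineM \<theta> d xs lam \<alpha>" using qM unfolding phiLineM_def by blast
  qed
  have sub: "S \<subseteq> L"
  proof
    fix q assume "q \<in> S"
    then obtain j where q: "q = (star \<theta> (xs j), rmod (\<alpha> + lam * xs j / of_int d) (1 / of_int d))"
      unfolding S_def by blast
    obtain m n :: int where r: "0 \<le> star \<theta> (xs j)" "star \<theta> (xs j) < cos \<theta> + sin \<theta>"
      using LamF_rep[OF A5 xs_in[OF A5]] by metis
    show "q \<in> L" unfolding L_def q shift using r by blast
  qed
  have dense: "\<exists>sp\<in>S. \<exists>k::int. \<bar>fst sp - fst p\<bar> < e \<and> \<bar>snd sp - snd p - of_int k / of_int d\<bar> < e"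
    if p: "p \<in> L" and e: "e > 0" for p e
  proof -
    obtain \<xi> where pe: "p = (\<xi>, rmod (\<alpha> - lamS / of_int d * \<xi>) (1 / of_int d))"
      and xi: "0 \<le> \<xi>" "\<xi> < cos \<theta> + sin \<theta>" using p unfolding L_def by blast
    define A where "A = \<bar>lamS\<bar> / of_int d"
    have A0: "A \<ge> 0" unfolding A_def using dp' by simp
    define \<delta> where "\<delta> = min (cos \<theta> + sin \<theta> - \<xi>) (e / (1 + A))"
    have dl: "\<delta> > 0" unfolding \<delta>_def using xi e A0 by simp
    obtain m n :: int where mn: "\<xi> < of_int m * sin \<theta> + of_int n * cos \<theta>"
      "of_int m * sin \<theta> + of_int n * cos \<theta> < \<xi> + \<delta>"
      using dense_grp[OF c assms(3) dl] by blast
    define \<sigma> where "\<sigma> = of_int m * sin \<theta> + of_int n * cos \<theta>"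
    have win: "0 \<le> \<sigma>" "\<sigma> < cos \<theta> + sin \<theta>" using mn xi unfolding \<sigma>_def \<delta>_def by auto
    have "of_int m * cos \<theta> - of_int n * sin \<theta> \<in> LamF \<theta>"
      unfolding LamF_iff[OF A5] using win unfolding \<sigma>_def by blast
    then obtain j where j: "xs j = of_int m * cos \<theta> - of_int n * sin \<theta>" using assms(5) by (metis imageE)
    have sj: "star \<theta> (xs j) = \<sigma>" unfolding j \<sigma>_def by (rule star_eq[OF c assms(3)])
    define sp where "sp = (star \<theta> (xs j), rmod (\<alpha> + lam * xs j / of_int d) (1 / of_int d))"
    have spS: "sp \<in> S" unfolding S_def sp_def by blast
    have sp2: "snd sp = rmod (\<alpha> - lamS / of_int d * \<sigma>) (1 / of_int d)"
      unfolding sp_def using shift[of j] sj by simp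
    define F1 where "F1 = \<lfloor>(\<alpha> - lamS / of_int d * \<sigma>) / (1 / of_int d)\<rfloor>"
    define F2 where "F2 = \<lfloor>(\<alpha> - lamS / of_int d * \<xi>) / (1 / of_int d)\<rfloor>"
    have "snd sp - snd p - of_int (F2 - F1) / of_int d = - (lamS / of_int d) * (\<sigma> - \<xi>)"
      unfolding sp2 pe F1_def F2_def rmod_def by (simp add: field_simps)
    then have "\<bar>snd sp - snd p - of_int (F2 - F1) / of_int d\<bar> = A * (\<sigma> - \<xi>)"
      unfolding A_def using mn \<sigma>_def dp' by (simp add: abs_mult)
    moreover have "(1 + A) * (\<sigma> - \<xi>) < e"
    proof -
      have "\<sigma> - \<xi> < e / (1 + A)" using mn unfolding \<sigma>_def \<delta>_def by simp
      then show ?thesis using A0 by (simp add: field_simps)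
    qed
    moreover have "\<sigma> - \<xi> > 0" using mn \<sigma>_def by simp
    ultimately have "\<bar>snd sp - snd p - of_int (F2 - F1) / of_int d\<bar> < e" by (simp add: algebra_simps)
    moreover have "\<bar>fst sp - fst p\<bar> < e"
    proof -
      have "A * (\<sigma> - \<xi>) \<ge> 0" using A0 \<open>\<sigma> - \<xi> > 0\<close> by simp
      then have "\<sigma> - \<xi> < e" using \<open>(1 + A) * (\<sigma> - \<xi>) < e\<close> by (simp add: algebra_simps)
      then show ?thesis using \<open>\<sigma> - \<xi> > 0\<close> sj pe unfolding sp_def by simp
    qed
    ultimately show ?thesis using spS by blast
  qed
  have H: "phiLineM \<theta> d xs lam \<alpha> = S \<and> denseM d (phiLineM \<theta> d xs lam \<alpha>) L"
    using eqS sub dense unfolding denseM_def by auto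
  show ?thesis unfolding Let_def using H unfolding lam_def lamS_def L_def S_def
    by (elim conjE) (intro conjI; assumption)
qed

end
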